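(* For any $\varepsilon \in \{-1,1\}^n$ and any $y \in \mathbb{R}^n$, let $$S = \{1 \le i \le n : \mathrm{sign}(y_i) \neq \varepsilon_i\}.$$ Then $$\left\| y - \left\langle y, \frac{\varepsilon}{\|\varepsilon\|}\right\rangle \frac{\varepsilon}{\|\varepsilon\|}\right\|^2 \ge \frac{\min\{\#S, n - \#S\}}{n}\, \|y\|^2.$$
   Context: $\mathrm{sign}(t)$ denotes the sign of a real number $t$ (with $\mathrm{sign}(0)=0$); $\|\cdot\|$ is the Euclidean norm. *)

theory Defs
  imports "HOL-Analysis.Analysis"
begin

end

theory Submission
  imports Defs
begin

theorem lemma2:
  fixes \<epsilon> y :: "real ^ 'n"
  assumes eps: "\<forall>i. \<epsilon> $ i \<in> {-1, 1}"
  defines "S \<equiv> {i. sgn (y $ i) \<noteq> \<epsilon> $ i}"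
  shows "(norm (y - (y \<bullet> (\<epsilon> /\<^sub>R norm \<epsilon>)) *\<^sub>R (\<epsilon> /\<^sub>R norm \<epsilon>)))\<^sup>2
           \<ge> real (min (card S) (CARD('n) - card S)) / real CARD('n) * (norm y)\<^sup>2"
proof -
  define n where "n = real CARD('n)"
  define T where "T = UNIV - S"
  define k where "k = card S"
  have npos: "n > 0" unfolding n_def by simp
  have sq: "\<And>i. (\<epsilon> $ i)\<^sup>2 = 1" using eps by (metis insert_iff power2_minus empty_iff one_power2)
  have ee: "\<epsilon> \<bullet> \<epsilon> = n" unfolding inner_vec_def n_def
    using sq by (simp add: power2_eq_square)
  have ne: "(norm \<epsilon>)\<^sup>2 = n" using ee by (simp add: power2_norm_eq_inner)
  have nepos: "norm \<epsilon> > 0" using ne npos by (metis norm_ge_zero order_le_less power_zero_numeral zero_less_numeral linorder_not_less order.strict_iff_not)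
  have yy: "(norm y)\<^sup>2 = (\<Sum>i\<in>UNIV. (y $ i)\<^sup>2)"
    unfolding power2_norm_eq_inner inner_vec_def by (simp add: power2_eq_square)
  define c where "c = y \<bullet> \<epsilon>"
  have lhs: "(norm (y - (y \<bullet> (\<epsilon> /\<^sub>R norm \<epsilon>)) *\<^sub>R (\<epsilon> /\<^sub>R norm \<epsilon>)))\<^sup>2
      = (norm y)\<^sup>2 - c\<^sup>2 / n"
  proof -
    define e where "e = \<epsilon> /\<^sub>R norm \<epsilon>"
    define t where "t = y \<bullet> e"
    have e1: "e \<bullet> e = 1" using nepos ne ee npos unfolding e_def
      by (simp add: power2_eq_square field_simps)
    have "(norm (y - t *\<^sub>R e))\<^sup>2 = y \<bullet> y - 2 * t * (y \<bullet> e) + t * t * (e \<bullet> e)"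
      unfolding power2_norm_eq_inner by (simp add: inner_diff inner_commute algebra_simps)
    also have "\<dots> = (norm y)\<^sup>2 - t\<^sup>2" using e1 unfolding t_def
      by (simp add: power2_norm_eq_inner power2_eq_square norm_eq_sqrt_inner)
    also have "t\<^sup>2 = c\<^sup>2 / n" unfolding t_def e_def c_def using ne
      by (simp add: power_mult_distrib power_inverse divide_inverse)
    finally show ?thesis unfolding t_def e_def .
  qed
  have fS: "finite S" "finite T" by auto
  have cardT: "card T = CARD('n) - k" unfolding T_def k_def
    by (simp add: card_Diff_subset)
  have onT: "y $ i * \<epsilon> $ i = \<bar>y $ i\<bar>" if "i \<in> T" for i
  proof -
    have "sgn (y $ i) = \<epsilon> $ i" using that by (simp add: T_def S_def)
    thus ?thesis by (metis abs_mult_sgn mult.commute abs_sgn)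
  qed
  have onS: "y $ i * \<epsilon> $ i = - \<bar>y $ i\<bar>" if "i \<in> S" for i
  proof (cases "y $ i = 0")
    case False
    have "sgn (y $ i) \<noteq> \<epsilon> $ i" using that by (simp add: S_def)
    then have "\<epsilon> $ i = - sgn (y $ i)" using eps False
      by (cases "y $ i > 0") (auto simp: sgn_if, metis)
    thus ?thesis by (simp add: abs_mult_sgn mult.commute abs_sgn)
  qed simp
  define a where "a = (\<Sum>i\<in>T. \<bar>y $ i\<bar>)"
  define b where "b = (\<Sum>i\<in>S. \<bar>y $ i\<bar>)"
  have "c = (\<Sum>i\<in>T. y $ i * \<epsilon> $ i) + (\<Sum>i\<in>S. y $ i * \<epsilon> $ i)"
    unfolding c_def inner_vec_def T_def
    using sum.subset_diff[of S UNIV "\<lambda>i. y $ i * \<epsilon> $ i"] by simp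
  also have "\<dots> = a - b" unfolding a_def b_def using onT onS
    by (simp add: sum_negf)
  finally have cab: "c = a - b" .
  have a0: "a \<ge> 0" "b \<ge> 0" unfolding a_def b_def by (auto intro: sum_nonneg)
  have "a\<^sup>2 \<le> (\<Sum>i\<in>T. (\<bar>y $ i\<bar>)\<^sup>2) * card T"
    unfolding a_def by (rule sum_squared_le_sum_of_squares)
  also have "\<dots> \<le> (norm y)\<^sup>2 * card T" unfolding yy
    by (intro mult_right_mono) (auto intro!: sum_mono2)
  finally have ha: "a\<^sup>2 \<le> (norm y)\<^sup>2 * (CARD('n) - k)" using cardT by simp
  have "b\<^sup>2 \<le> (\<Sum>i\<in>S. (\<bar>y $ i\<bar>)\<^sup>2) * card S"
    unfolding b_def by (rule sum_squared_le_sum_of_squares)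
  also have "\<dots> \<le> (norm y)\<^sup>2 * card S" unfolding yy
    by (intro mult_right_mono) (auto intro!: sum_mono2)
  finally have hb: "b\<^sup>2 \<le> (norm y)\<^sup>2 * k" unfolding k_def by simp
  have kle: "k \<le> CARD('n)" unfolding k_def by (simp add: card_mono)
  have mx: "real (CARD('n) - k) \<le> n - real (min k (CARD('n) - k))"
       "real k \<le> n - real (min k (CARD('n) - k))"
    using kle unfolding n_def by (auto simp: min_def of_nat_diff)
  have "(a - b)\<^sup>2 \<le> max (a\<^sup>2) (b\<^sup>2)" using a0
  proof (cases "a \<le> b")
    case True
    have "(a - b)\<^sup>2 = (b - a)\<^sup>2" by (simp add: power2_commute)
    also have "\<dots> \<le> b\<^sup>2" using True a0 by (intro power_mono) auto
    finally show ?thesis by simp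
  next
    case False
    have "(a - b)\<^sup>2 \<le> a\<^sup>2" using False a0 by (intro power_mono) auto
    thus ?thesis by simp
  qed
  also have "\<dots> \<le> (norm y)\<^sup>2 * (n - real (min k (CARD('n) - k)))"
    using ha hb mx by (meson max.boundedI mult_left_mono order_trans zero_le_power2)
  finally have key: "c\<^sup>2 \<le> (norm y)\<^sup>2 * (n - real (min k (CARD('n) - k)))" using cab by simp
  show ?thesis unfolding lhs k_def[symmetric] n_def[symmetric]
    using key npos by (simp add: field_simps)
qed

end
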